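(* Let $G$ be a finite non-abelian group such that $G/Z(G)\cong C_2\times C_2$. Then the non-centralizer graph $\Upsilon_G$ is regular.
   Context: For a finite group $G$, $C_G(x)$ denotes the centralizer of $x\in G$ and $Z(G)$ the center. The non-centralizer graph $\Upsilon_G$ is the simple graph with vertex set $G$ in which two distinct vertices $x,y$ are adjacent if and only if $C_G(x)\neq C_G(y)$. A graph is regular if all its vertices have the same degree. *)

theory Defs
  imports "HOL-Algebra.Algebra"
begin

definition centralizer :: "('a, 'b) monoid_scheme \<Rightarrow> 'a \<Rightarrow> 'a set" where
  "centralizer G x = {y \<in> carrier G. x \<otimes>\<^bsub>G\<^esub> y = y \<otimes>\<^bsub>G\<^esub> x}"

definition center :: "('a, 'b) monoid_scheme \<Rightarrow> 'a set" where
  "center G = {z \<in> carrier G. \<forall>y \<in> carrier G. z \<otimes>\<^bsub>G\<^esub> y = y \<otimes>\<^bsub>G\<^esub> z}"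

definition noncentralizer_adj :: "('a, 'b) monoid_scheme \<Rightarrow> 'a \<Rightarrow> 'a \<Rightarrow> bool" where
  "noncentralizer_adj G x y \<longleftrightarrow> x \<in> carrier G \<and> y \<in> carrier G \<and> x \<noteq> y
     \<and> centralizer G x \<noteq> centralizer G y"

definition noncentralizer_degree :: "('a, 'b) monoid_scheme \<Rightarrow> 'a \<Rightarrow> nat" where
  "noncentralizer_degree G x = card {y \<in> carrier G. noncentralizer_adj G x y}"

definition noncentralizer_graph_regular :: "('a, 'b) monoid_scheme \<Rightarrow> bool" where
  "noncentralizer_graph_regular G \<longleftrightarrow>
     (\<forall>x \<in> carrier G. \<forall>y \<in> carrier G. noncentralizer_degree G x = noncentralizer_degree G y)"

end

theory Submission
  imports Defs
begin

lemma (in group) comm_inv: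
  assumes "a \<in> carrier G" "y \<in> carrier G" "a \<otimes> y = y \<otimes> a"
  shows "inv a \<otimes> y = y \<otimes> inv a"
proof -
  have "inv a \<otimes> y = inv a \<otimes> y \<otimes> (a \<otimes> inv a)" using assms by simp
  also have "\<dots> = inv a \<otimes> (y \<otimes> a) \<otimes> inv a" using assms by (simp add: m_assoc)
  also have "\<dots> = inv a \<otimes> (a \<otimes> y) \<otimes> inv a" using assms by simp
  also have "\<dots> = y \<otimes> inv a" using assms(1,2) by (simp add: m_assoc[symmetric])
  finally show ?thesis .
qed
lemma center_subgroup:
  fixes G (structure)
  assumes "group G" shows "subgroup (center G) G"
proof -
  interpret group G by fact
  show ?thesis
  proof (rule subgroupI)
    show "center G \<subseteq> carrier G" by (auto simp: center_def)
    show "center G \<noteq> {}" using one_closed by (auto simp: center_def)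
  next
    fix a assume a: "a \<in> center G"
    then have ac: "a \<in> carrier G" by (simp add: center_def)
    have "inv a \<otimes> y = y \<otimes> inv a" if y: "y \<in> carrier G" for y
    proof -
      have "a \<otimes> y = y \<otimes> a" using a y by (auto simp: center_def)
      then show ?thesis by (rule comm_inv[OF ac y])
    qed
    then show "inv a \<in> center G" using ac by (auto simp: center_def)
  next
    fix a b assume a: "a \<in> center G" and b: "b \<in> center G"
    then have ac: "a \<in> carrier G" and bc: "b \<in> carrier G" by (auto simp: center_def)
    have "a \<otimes> b \<otimes> y = y \<otimes> (a \<otimes> b)" if y: "y \<in> carrier G" for y
    proof -
      have "a \<otimes> y = y \<otimes> a" "b \<otimes> y = y \<otimes> b" using a b y by (auto simp: center_def)
      then have "a \<otimes> b \<otimes> y = a \<otimes> (y \<otimes> b)" using ac bc y by (simp add: m_assoc)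
      also have "\<dots> = a \<otimes> y \<otimes> b" using ac bc y by (simp add: m_assoc)
      also have "\<dots> = y \<otimes> a \<otimes> b" using \<open>a \<otimes> y = y \<otimes> a\<close> by simp
      finally show ?thesis using ac bc y by (simp add: m_assoc)
    qed
    then show "a \<otimes> b \<in> center G" using ac bc by (auto simp: center_def)
  qed
qed

lemma centralizer_subgroup:
  fixes G (structure)
  assumes "group G" "x \<in> carrier G" shows "subgroup (centralizer G x) G"
proof -
  interpret group G by fact
  show ?thesis
  proof (rule subgroupI)
    show "centralizer G x \<subseteq> carrier G" by (auto simp: centralizer_def)
    show "centralizer G x \<noteq> {}" using one_closed assms(2) by (auto simp: centralizer_def)
  next
    fix a assume a: "a \<in> centralizer G x"
    then have ac: "a \<in> carrier G" and e: "x \<otimes> a = a \<otimes> x" by (auto simp: centralizer_def)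
    have "x \<otimes> inv a = inv a \<otimes> x" using comm_inv[OF ac assms(2)] e by simp
    then show "inv a \<in> centralizer G x" using ac by (auto simp: centralizer_def)
  next
    fix a b assume a: "a \<in> centralizer G x" and b: "b \<in> centralizer G x"
    then have ac: "a \<in> carrier G" and bc: "b \<in> carrier G"
      and e: "x \<otimes> a = a \<otimes> x" "x \<otimes> b = b \<otimes> x" by (auto simp: centralizer_def)
    have "x \<otimes> (a \<otimes> b) = x \<otimes> a \<otimes> b" using ac bc assms(2) by (simp add: m_assoc)
    also have "\<dots> = a \<otimes> (x \<otimes> b)" using ac bc assms(2) e by (simp add: m_assoc)
    also have "\<dots> = a \<otimes> b \<otimes> x" using ac bc assms(2) e by (simp add: m_assoc)
    finally have "x \<otimes> (a \<otimes> b) = a \<otimes> b \<otimes> x" .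
    then show "a \<otimes> b \<in> centralizer G x" using ac bc by (auto simp: centralizer_def)
  qed
qed

theorem theorem2p7:
  fixes G (structure)
  assumes "group G"
    and "finite (carrier G)"
    and "\<not> comm_group G"
    and "G Mod (center G) \<cong> DirProd (integer_mod_group 2) (integer_mod_group 2)"
  shows "noncentralizer_graph_regular G"
proof -
  interpret group G by fact
  define Z where "Z = center G"
  have fin: "finite (carrier G)" by fact
  have ZS: "subgroup Z G" unfolding Z_def by (rule center_subgroup) fact
  have Zc: "Z \<subseteq> carrier G" by (auto simp: Z_def center_def)
  have finZ: "finite Z" using Zc fin finite_subset by blast
  have "card (carrier (G Mod Z)) = card (carrier (DirProd (integer_mod_group 2) (integer_mod_group 2)))"
    using iso_same_card assms(4) Z_def by blast
  also have "\<dots> = 4" by (simp add: carrier_integer_mod_group)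
  finally have "card (rcosets Z) = 4" by (simp add: FactGroup_def)
  with lagrange[OF ZS] have cardG: "card (carrier G) = 4 * card Z" by (simp add: order_def)
  have Zpos: "card Z > 0" using finZ subgroup.one_closed[OF ZS] by (metis card_gt_0_iff empty_iff)
  have cardcos: "card (Z #> x) = card Z" if "x \<in> carrier G" for x
    using card_rcosets_equal[OF rcosetsI[OF Zc that] Zc] by simp
  have Cfull: "centralizer G x = carrier G" if "x \<in> Z" for x
    using that by (auto simp: Z_def center_def centralizer_def)
  have Cfull2: "x \<in> Z" if "x \<in> carrier G" "centralizer G x = carrier G" for x
    using that by (auto simp: Z_def center_def centralizer_def)
  have KEY: "centralizer G x = Z \<union> (Z #> x)" if x: "x \<in> carrier G" "x \<notin> Z" for x
  proof -
    define C where "C = centralizer G x"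
    have CS: "subgroup C G" unfolding C_def by (rule centralizer_subgroup) (fact, fact)
    have Cc: "C \<subseteq> carrier G" by (auto simp: C_def centralizer_def)
    have ZC: "Z \<subseteq> C" using Zc by (auto simp: Z_def center_def C_def centralizer_def x(1))
    have xC: "x \<in> C" using x by (auto simp: C_def centralizer_def)
    have CG: "C \<noteq> carrier G" using Cfull2 x unfolding C_def by blast
    have finC: "finite C" using Cc fin finite_subset by blast
    have lt1: "card Z < card C" using ZC xC x(2) finC by (metis psubsetI psubset_card_mono)
    have lt2: "card C < card (carrier G)" using Cc CG fin by (metis psubsetI psubset_card_mono)
    define m where "m = card (rcosets C)"
    have m: "card (carrier G) = m * card C"
      using lagrange[OF CS] unfolding m_def order_def by simp
    define H where "H = G\<lparr>carrier := C\<rparr>"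
    have gH: "group H" unfolding H_def by (rule subgroup.subgroup_is_group[OF CS]) fact
    have ZH: "subgroup Z H"
      using subgroup_incl[OF ZS CS ZC] unfolding H_def .
    define k where "k = card (rcosets\<^bsub>H\<^esub> Z)"
    have k: "card C = k * card Z"
      using group.lagrange[OF gH ZH] unfolding k_def order_def H_def by simp
    have "4 * card Z = (m * k) * card Z" using cardG m k by (simp add: mult.assoc)
    then have mk: "m * k = 4" using Zpos by simp
    have k2: "k \<ge> 2" using lt1 k Zpos
      by (cases k; simp; case_tac nat; simp)
    have m2: "m \<ge> 2" using lt2 m
      by (cases m; simp; case_tac nat; simp)
    have "k = 2"
    proof -
      have "k * 2 \<le> k * m" using m2 by (intro mult_le_mono2)
      moreover have "k * m = 4" using mk by (simp only: mult.commute)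
      ultimately have "k * 2 \<le> 4" by linarith
      then have "k \<le> 2" by linarith
      then show ?thesis using k2 by simp
    qed
    then have cardC: "card C = 2 * card Z" using k by simp
    have sub: "Z \<union> (Z #> x) \<subseteq> C"
    proof
      fix y assume "y \<in> Z \<union> (Z #> x)"
      then show "y \<in> C"
      proof
        assume "y \<in> Z" then show ?thesis using ZC by blast
      next
        assume "y \<in> Z #> x"
        then obtain z where z: "z \<in> Z" "y = z \<otimes> x" by (auto simp: r_coset_def)
        then show ?thesis using subgroup.m_closed[OF CS] ZC xC by blast
      qed
    qed
    have disj: "Z \<inter> (Z #> x) = {}"
    proof (rule ccontr)
      assume "Z \<inter> (Z #> x) \<noteq> {}"
      then obtain z z' where z: "z \<in> Z" "z' \<in> Z" "z' = z \<otimes> x" by (auto simp: r_coset_def)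
      then have "x = inv z \<otimes> z'" using Zc x(1)
        by (simp add: m_assoc[symmetric] subsetD)
      moreover have "inv z \<otimes> z' \<in> Z" using z subgroup.m_closed[OF ZS] subgroup.m_inv_closed[OF ZS] by blast
      ultimately have "x \<in> Z" by simp
      then show False using x(2) by simp
    qed
    have finU: "finite (Z \<union> (Z #> x))" using sub finC finite_subset by blast
    have "card (Z \<union> (Z #> x)) = card Z + card (Z #> x)"
      using card_Un_disjoint[OF _ _ disj] finU by auto
    then have "card (Z \<union> (Z #> x)) = card C" using cardcos[OF x(1)] cardC by simp
    then show ?thesis using card_subset_eq[OF finC sub] C_def by simp
  qed
  have SAME: "centralizer G y = centralizer G x" if x: "x \<in> carrier G" and y: "y \<in> Z #> x" for x y
  proof -
    obtain z where z: "z \<in> Z" "y = z \<otimes> x" using y by (auto simp: r_coset_def)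
    have zc: "z \<in> carrier G" using z Zc by blast
    have iff: "y \<otimes> w = w \<otimes> y \<longleftrightarrow> x \<otimes> w = w \<otimes> x" if w: "w \<in> carrier G" for w
    proof -
      have zw: "z \<otimes> w = w \<otimes> z" using z w by (auto simp: Z_def center_def)
      have "y \<otimes> w = z \<otimes> (x \<otimes> w)" using z zc x w by (simp add: m_assoc)
      moreover have "w \<otimes> y = w \<otimes> z \<otimes> x" using z zc x w by (simp add: m_assoc)
      moreover have "w \<otimes> z \<otimes> x = z \<otimes> (w \<otimes> x)" using zw zc x w by (simp flip: m_assoc)
      ultimately show ?thesis using zc x w by simp
    qed
    have "w \<in> centralizer G y \<longleftrightarrow> w \<in> centralizer G x" for w
    proof (cases "w \<in> carrier G")
      case True
      then show ?thesis unfolding centralizer_def using iff[OF True] by (simp add: eq_commute)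
    qed (simp add: centralizer_def)
    then show ?thesis by blast
  qed
  have CONV: "y \<in> Z #> x" if x: "x \<in> carrier G" and y: "y \<in> carrier G"
    and e: "centralizer G y = centralizer G x" for x y
  proof (cases "x \<in> Z")
    case True
    then have "y \<in> Z" using Cfull2[OF y] e Cfull[OF True] by simp
    then show ?thesis using coset_join2[OF x ZS True] by simp
  next
    case False
    have "y \<in> centralizer G y" using y by (auto simp: centralizer_def)
    then have "y \<in> Z \<union> (Z #> x)" using KEY[OF x False] e by simp
    moreover have "y \<notin> Z"
    proof
      assume "y \<in> Z"
      then have "centralizer G x = carrier G" using Cfull e by simp
      then show False using Cfull2[OF x] False by simp
    qed
    ultimately show ?thesis by blast
  qed
  have DEG: "noncentralizer_degree G x = card (carrier G) - card Z" if x: "x \<in> carrier G" for x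
  proof -
    have xin: "x \<in> Z #> x" using rcos_self[OF x ZS] .
    have "{y \<in> carrier G. noncentralizer_adj G x y} = carrier G - (Z #> x)"
    proof (rule Set.set_eqI)
      fix y
      show "y \<in> {y \<in> carrier G. noncentralizer_adj G x y} \<longleftrightarrow> y \<in> carrier G - (Z #> x)"
      proof (cases "y \<in> carrier G")
        case True
        show ?thesis
        proof (cases "y \<in> Z #> x")
          case yin: True
          have "centralizer G y = centralizer G x" using SAME[OF x yin] .
          then show ?thesis using yin unfolding noncentralizer_adj_def by simp
        next
          case yout: False
          have "centralizer G y \<noteq> centralizer G x" using CONV[OF x True] yout by blast
          moreover have "x \<noteq> y" using xin yout by blast
          ultimately show ?thesis using yout True x unfolding noncentralizer_adj_def by simp
        qed
      qed simp
    qed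
    moreover have "Z #> x \<subseteq> carrier G" using r_coset_subset_G[OF Zc x] .
    ultimately show ?thesis unfolding noncentralizer_degree_def
      using card_Diff_subset[of "Z #> x" "carrier G"] finite_subset[OF _ fin] cardcos[OF x] by simp
  qed
  show ?thesis unfolding noncentralizer_graph_regular_def using DEG by simp
qed

end
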